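(* Let $m<n$ be natural numbers, $Y=[\omega]^n$, $\mathcal{I}$ the ideal of thin subsets of $[\omega]^n$, and $\psi=\lambda^{(n-m)}\partial^{(n-m)}$. Suppose $S\subseteq[\omega]^n$ is not $(<\!\aleph_0)$-near-closed, and let $p,q\in\beta[\omega]^n$ be such that $p$ $\psi$-intertwines $q$ over $S$ modulo $\mathcal{I}$. Then $\pi^n_m(p)=\pi^n_m(q)$.
   Context: $T\subseteq[\omega]^k$ is thick if for every $j\geq k$ there is $s\in[\omega]^j$ with $[s]^k\subseteq T$; thin otherwise (thin sets form an ideal). For $T\subseteq[\omega]^n$, $\partial^{(n-m)}T=\{s\in[\omega]^m:\exists t\in[\omega]^{n-m}\ (s\cup t\in T)\}$, and for $A\subseteq[\omega]^m$, $\lambda^{(n-m)}A=\{s\in[\omega]^n:[s]^m\subseteq A\}$. For a thick ultrafilter $p$ on $[\omega]^n$, $\pi^n_m(p)$ is the unique thick ultrafilter $q'$ on $[\omega]^m$ such that $\{a\in[\omega]^n:[a]^m\subseteq R\}\in p$ for every $R\in q'$. Write $R\subseteq_{\mathcal{I}}T$ if $R\setminus T\in\mathcal{I}$. A set $T$ is closed if $\psi(T)=T$; near-closed if $T\,\Delta\,T'\in\mathcal{I}$ for some closed $T'$; $(<\!\aleph_0)$-near-closed if $T\,\Delta\,(T_0\cup\dots\cup T_{k-1})\in\mathcal{I}$ for some $k<\omega$ and closed $T_i$. For $S$ not $(<\!\aleph_0)$-near-closed, $p$ $\psi$-intertwines $q$ over $S$ modulo $\mathcal{I}$ if: (1) $S\setminus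 T\in p$ for every near-closed $T$ with $T\subseteq_{\mathcal{I}}S$; (2) $\psi(T)\setminus S\in q$ for every $T\in p$ with $T\subseteq S$; (3) $p$ and $q$ contain the complement of every member of $\mathcal{I}$. *)

theory Defs
  imports Main
begin

definition kset :: "nat \<Rightarrow> nat set set" where
  "kset k = {s. finite s \<and> card s = k}"

definition ksub :: "nat set \<Rightarrow> nat \<Rightarrow> nat set set" where
  "ksub s k = {t. t \<subseteq> s \<and> finite t \<and> card t = k}"

definition thick :: "nat \<Rightarrow> nat set set \<Rightarrow> bool" where
  "thick k T \<longleftrightarrow> (\<forall>j\<ge>k. \<exists>s\<in>kset j. ksub s k \<subseteq> T)"

definition thin :: "nat \<Rightarrow> nat set set \<Rightarrow> bool" where
  "thin k T \<longleftrightarrow> \<not> thick k T"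

definition thin_ideal :: "nat \<Rightarrow> nat set set set" where
  "thin_ideal n = {T. T \<subseteq> kset n \<and> thin n T}"

definition shadow :: "nat \<Rightarrow> nat \<Rightarrow> nat set set \<Rightarrow> nat set set" where
  "shadow m n T = {s \<in> kset m. \<exists>t \<in> kset (n - m). s \<union> t \<in> T}"

definition lift :: "nat \<Rightarrow> nat \<Rightarrow> nat set set \<Rightarrow> nat set set" where
  "lift m n A = {s \<in> kset n. ksub s m \<subseteq> A}"

definition psi :: "nat \<Rightarrow> nat \<Rightarrow> nat set set \<Rightarrow> nat set set" where
  "psi m n T = lift m n (shadow m n T)"

definition ultrafilter_on :: "'a set \<Rightarrow> 'a set set \<Rightarrow> bool" where
  "ultrafilter_on X U \<longleftrightarrow>
     (\<forall>A\<in>U. A \<subseteq> X) \<and> X \<in> U \<and> {} \<notin> U \<and>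
     (\<forall>A B. A \<in> U \<and> A \<subseteq> B \<and> B \<subseteq> X \<longrightarrow> B \<in> U) \<and>
     (\<forall>A B. A \<in> U \<and> B \<in> U \<longrightarrow> A \<inter> B \<in> U) \<and>
     (\<forall>A. A \<subseteq> X \<longrightarrow> A \<in> U \<or> X - A \<in> U)"

definition thick_ultrafilter :: "nat \<Rightarrow> nat set set set \<Rightarrow> bool" where
  "thick_ultrafilter k U \<longleftrightarrow> ultrafilter_on (kset k) U \<and> (\<forall>A\<in>U. thick k A)"

definition proj :: "nat \<Rightarrow> nat \<Rightarrow> nat set set set \<Rightarrow> nat set set set" where
  "proj n m p = (THE q'. thick_ultrafilter m q' \<and>
      (\<forall>R\<in>q'. {a \<in> kset n. ksub a m \<subseteq> R} \<in> p))"

definition closed_set :: "nat \<Rightarrow> nat \<Rightarrow> nat set set \<Rightarrow> bool" where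
  "closed_set m n T \<longleftrightarrow> T \<subseteq> kset n \<and> psi m n T = T"

definition near_closed :: "nat \<Rightarrow> nat \<Rightarrow> nat set set \<Rightarrow> bool" where
  "near_closed m n T \<longleftrightarrow>
     (\<exists>T'. closed_set m n T' \<and> (T - T') \<union> (T' - T) \<in> thin_ideal n)"

definition fin_near_closed :: "nat \<Rightarrow> nat \<Rightarrow> nat set set \<Rightarrow> bool" where
  "fin_near_closed m n T \<longleftrightarrow>
     (\<exists>k::nat. \<exists>Ts::nat \<Rightarrow> nat set set. (\<forall>i<k. closed_set m n (Ts i)) \<and>
        (let U = (\<Union>i<k. Ts i) in (T - U) \<union> (U - T) \<in> thin_ideal n))"

definition intertwines ::
  "nat \<Rightarrow> nat \<Rightarrow> nat set set set \<Rightarrow> nat set set set \<Rightarrow> nat set set \<Rightarrow> bool" where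
  "intertwines m n p q S \<longleftrightarrow>
     (\<forall>T. T \<subseteq> kset n \<and> near_closed m n T \<and> T - S \<in> thin_ideal n \<longrightarrow> S - T \<in> p) \<and>
     (\<forall>T\<in>p. T \<subseteq> S \<longrightarrow> psi m n T - S \<in> q) \<and>
     (\<forall>A\<in>thin_ideal n. kset n - A \<in> p \<and> kset n - A \<in> q)"

end

theory Submission
  imports Defs "HOL-Library.Ramsey"
begin

lemma ksub_nsets: "ksub s k = nsets s k"
  by (simp add: ksub_def nsets_def)

lemma ksub_nonempty:
  assumes "a \<in> kset n" "m \<le> n"
  shows "\<exists>b. b \<in> ksub a m"
proof -
  from assms have "m \<le> card a" by (simp add: kset_def)
  then obtain b where "b \<subseteq> a" "card b = m" "finite b" by (rule obtain_subset_with_card_n)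
  thus ?thesis by (auto simp: ksub_def)
qed

lemma ksub_in_kset: "b \<in> ksub a m \<Longrightarrow> b \<in> kset m"
  by (simp add: ksub_def kset_def)

lemma ramsey_fin:
  assumes "m \<le> n"
  shows "\<exists>j\<ge>n. \<forall>s\<in>kset j. \<exists>A\<in>ksub s n. ksub A m \<subseteq> R \<or> ksub A m \<inter> R = {}"
proof -
  obtain N :: nat where N: "partn_lst {..<N} [n,n] m" using ramsey_full[of "[n,n]" m] by blast
  define j where "j = max N n"
  have P: "partn_lst {..<j} [n,n] m"
    using partn_lst_greater_resource[OF N] by (simp add: j_def)
  have "\<forall>s\<in>kset j. \<exists>A\<in>ksub s n. ksub A m \<subseteq> R \<or> ksub A m \<inter> R = {}"
  proof
    fix s assume s: "s \<in> kset j"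
    hence fs: "finite s" and cs: "card s = j" by (auto simp: kset_def)
    obtain h where h: "bij_betw h {..<j} s"
      using ex_bij_betw_nat_finite[OF fs] cs by (auto simp: atLeast0LessThan)
    define f where "f x = (if h ` x \<in> R then 0 else 1::nat)" for x
    have "f \<in> nsets {..<j} m \<rightarrow> {..<2}" by (auto simp: f_def)
    from partn_lstE[OF P this] obtain i H where
      i: "i < length [n,n]" and H: "H \<in> nsets {..<j} ([n,n]!i)" and fH: "f ` nsets H m \<subseteq> {i}"
      by auto
    have Hn: "H \<in> nsets {..<j} n" using H i by (cases i) auto
    have injH: "inj_on h H" using h Hn by (auto simp: bij_betw_def nsets_def intro: inj_on_subset)
    have A: "h ` H \<in> ksub s n"
      using Hn h injH by (auto simp: ksub_def nsets_def bij_betw_def card_image)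
    have key: "\<And>y. y \<in> ksub (h ` H) m \<Longrightarrow> f (H \<inter> h -` y) = i \<and> y = h ` (H \<inter> h -` y)"
    proof -
      fix y assume y: "y \<in> ksub (h ` H) m"
      then obtain Y where Y: "Y \<in> nsets H m" "y = h ` Y"
        using nset_image_obtains[of y h H m] injH by (auto simp: ksub_nsets)
      have "Y = H \<inter> h -` y" using Y injH by (auto simp: nsets_def inj_on_def)
      thus "f (H \<inter> h -` y) = i \<and> y = h ` (H \<inter> h -` y)" using Y fH by auto
    qed
    have "ksub (h ` H) m \<subseteq> R \<or> ksub (h ` H) m \<inter> R = {}"
    proof (cases "i = 0")
      case True
      have "ksub (h ` H) m \<subseteq> R"
      proof
        fix y assume y: "y \<in> ksub (h ` H) m"
        from key[OF y] True show "y \<in> R" by (auto simp: f_def split: if_splits)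
      qed
      thus ?thesis by blast
    next
      case False
      have "ksub (h ` H) m \<inter> R = {}"
      proof (rule ccontr)
        assume "ksub (h ` H) m \<inter> R \<noteq> {}"
        then obtain y where y: "y \<in> ksub (h ` H) m" "y \<in> R" by blast
        from key[OF y(1)] y(2) False show False by (auto simp: f_def split: if_splits)
      qed
      thus ?thesis by blast
    qed
    with A show "\<exists>A\<in>ksub s n. ksub A m \<subseteq> R \<or> ksub A m \<inter> R = {}" by blast
  qed
  moreover have "j \<ge> n" by (simp add: j_def)
  ultimately show ?thesis by blast
qed

lemma mixed_thin:
  assumes "m \<le> n"
  shows "kset n - (lift m n R \<union> lift m n (kset m - R)) \<in> thin_ideal n"
proof -
  obtain j where j: "j \<ge> n" "\<forall>s\<in>kset j. \<exists>A\<in>ksub s n. ksub A m \<subseteq> R \<or> ksub A m \<inter> R = {}"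
    using ramsey_fin[OF assms] by blast
  have "\<not> (\<exists>s\<in>kset j. ksub s n \<subseteq> kset n - (lift m n R \<union> lift m n (kset m - R)))"
  proof
    assume "\<exists>s\<in>kset j. ksub s n \<subseteq> kset n - (lift m n R \<union> lift m n (kset m - R))"
    then obtain s where s: "s \<in> kset j" "ksub s n \<subseteq> kset n - (lift m n R \<union> lift m n (kset m - R))" by blast
    then obtain A where A: "A \<in> ksub s n" "ksub A m \<subseteq> R \<or> ksub A m \<inter> R = {}" using j by blast
    have Ak: "A \<in> kset n" using A(1) by (rule ksub_in_kset)
    have "A \<in> lift m n R \<union> lift m n (kset m - R)"
      using A(2) Ak ksub_in_kset[of _ A m] by (auto simp: lift_def)
    thus False using s(2) A(1) by blast
  qed
  thus ?thesis using j(1) by (auto simp: thin_ideal_def thin_def thick_def)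
qed

lemma thin_empty: "{} \<in> thin_ideal n"
proof -
  have "\<not> (\<exists>s\<in>kset n. ksub s n \<subseteq> {})"
    by (auto simp: kset_def ksub_def)
  thus ?thesis by (auto simp: thin_ideal_def thin_def thick_def)
qed

lemma lift_empty: assumes "m \<le> n" shows "lift m n {} = {}"
proof -
  { fix s assume "s \<in> lift m n {}"
    hence "s \<in> kset n" "ksub s m \<subseteq> {}" by (auto simp: lift_def)
    then have False using ksub_nonempty[OF _ assms] by blast }
  thus ?thesis by blast
qed

lemma uf_p1: assumes "ultrafilter_on X U" shows "\<forall>A\<in>U. A \<subseteq> X"
  using assms unfolding ultrafilter_on_def by (elim conjE) assumption
lemma uf_p2: assumes "ultrafilter_on X U" shows "X \<in> U"
  using assms unfolding ultrafilter_on_def by (elim conjE) assumption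
lemma uf_p3: assumes "ultrafilter_on X U" shows "{} \<notin> U"
  using assms unfolding ultrafilter_on_def by (elim conjE) assumption
lemma uf_p4: assumes "ultrafilter_on X U" shows "\<forall>A B. A \<in> U \<and> A \<subseteq> B \<and> B \<subseteq> X \<longrightarrow> B \<in> U"
  using assms unfolding ultrafilter_on_def by (elim conjE) assumption
lemma uf_p5: assumes "ultrafilter_on X U" shows "\<forall>A B. A \<in> U \<and> B \<in> U \<longrightarrow> A \<inter> B \<in> U"
  using assms unfolding ultrafilter_on_def by (elim conjE) assumption
lemma uf_p6: assumes "ultrafilter_on X U" shows "\<forall>A. A \<subseteq> X \<longrightarrow> A \<in> U \<or> X - A \<in> U"
  using assms unfolding ultrafilter_on_def by (elim conjE) assumption

lemma uf_sub: "ultrafilter_on X U \<Longrightarrow> A \<in> U \<Longrightarrow> A \<subseteq> X"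
  using uf_p1 by blast
lemma uf_X: "ultrafilter_on X U \<Longrightarrow> X \<in> U"
  using uf_p2 by blast
lemma uf_empty: "ultrafilter_on X U \<Longrightarrow> {} \<notin> U"
  using uf_p3 by blast
lemma uf_up: "ultrafilter_on X U \<Longrightarrow> A \<in> U \<Longrightarrow> A \<subseteq> B \<Longrightarrow> B \<subseteq> X \<Longrightarrow> B \<in> U"
  using uf_p4 by blast
lemma uf_int: "ultrafilter_on X U \<Longrightarrow> A \<in> U \<Longrightarrow> B \<in> U \<Longrightarrow> A \<inter> B \<in> U"
  using uf_p5 by blast
lemma uf_compl: "ultrafilter_on X U \<Longrightarrow> A \<subseteq> X \<Longrightarrow> A \<notin> U \<Longrightarrow> X - A \<in> U"
  using uf_p6 by blast

lemma ultra_inter_empty: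
  assumes "ultrafilter_on X U" "A \<in> U" "B \<in> U" "A \<inter> B = {}" shows False
  using assms uf_int[OF assms(1-3)] uf_empty[OF assms(1)] by simp

definition Fp :: "nat \<Rightarrow> nat \<Rightarrow> nat set set set \<Rightarrow> nat set set set" where
  "Fp m n p = {R. R \<subseteq> kset m \<and> lift m n R \<in> p}"

lemma lift_disj:
  assumes "m \<le> n" shows "lift m n R \<inter> lift m n (kset m - R) = {}"
proof -
  { fix s assume "s \<in> lift m n R" "s \<in> lift m n (kset m - R)"
    hence "s \<in> kset n" "ksub s m \<subseteq> R" "ksub s m \<subseteq> kset m - R" by (auto simp: lift_def)
    then have False using ksub_nonempty[OF _ assms] by blast }
  thus ?thesis by blast
qed

lemma Fp_ultra:
  assumes mn: "m \<le> n" and p: "ultrafilter_on (kset n) p"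
    and th: "\<forall>A\<in>thin_ideal n. kset n - A \<in> p"
    and R: "R \<subseteq> kset m"
  shows "R \<in> Fp m n p \<or> kset m - R \<in> Fp m n p"
proof (rule ccontr)
  assume "\<not> ?thesis"
  hence n1: "lift m n R \<notin> p" and n2: "lift m n (kset m - R) \<notin> p" using R by (auto simp: Fp_def)
  have l1: "lift m n R \<subseteq> kset n" "lift m n (kset m - R) \<subseteq> kset n" by (auto simp: lift_def)
  have c1: "kset n - lift m n R \<in> p" using uf_compl[OF p l1(1) n1] .
  have c2: "kset n - lift m n (kset m - R) \<in> p" using uf_compl[OF p l1(2) n2] .
  have c3: "kset n - (kset n - (lift m n R \<union> lift m n (kset m - R))) \<in> p"
    using th mixed_thin[OF mn] by blast
  have "(kset n - lift m n R) \<inter> (kset n - lift m n (kset m - R)) \<in> p"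
    using uf_int[OF p c1 c2] .
  moreover have "(kset n - lift m n R) \<inter> (kset n - lift m n (kset m - R))
      \<inter> (kset n - (kset n - (lift m n R \<union> lift m n (kset m - R)))) = {}" by blast
  ultimately show False using ultra_inter_empty[OF p _ c3] by blast
qed

lemma lift_inter: "lift m n (A \<inter> B) = lift m n A \<inter> lift m n B"
  by (auto simp: lift_def)

lemma lift_mono: "A \<subseteq> B \<Longrightarrow> lift m n A \<subseteq> lift m n B"
  by (auto simp: lift_def)

lemma p_thick:
  assumes p: "ultrafilter_on (kset n) p" and th: "\<forall>A\<in>thin_ideal n. kset n - A \<in> p"
    and A: "A \<in> p" shows "thick n A"
proof (rule ccontr)
  assume "\<not> thick n A"
  moreover have "A \<subseteq> kset n" using uf_sub[OF p A] .
  ultimately have "kset n - A \<in> p" using th by (auto simp: thin_ideal_def thin_def)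
  thus False using ultra_inter_empty[OF p A] by blast
qed

lemma Fp_thick:
  assumes mn: "m \<le> n" and p: "ultrafilter_on (kset n) p"
    and th: "\<forall>A\<in>thin_ideal n. kset n - A \<in> p"
    and R: "R \<in> Fp m n p"
  shows "thick m R"
  unfolding thick_def
proof (intro allI impI)
  fix j assume jm: "j \<ge> m"
  have "thick n (lift m n R)" using p_thick[OF p th] R by (auto simp: Fp_def)
  then obtain s' where s': "s' \<in> kset (max j n)" "ksub s' n \<subseteq> lift m n R"
    unfolding thick_def by (meson max.cobounded2)
  have fs': "finite s'" "card s' = max j n" using s'(1) by (auto simp: kset_def)
  then obtain s where s: "s \<subseteq> s'" "card s = j" "finite s"
    by (metis max.cobounded1 obtain_subset_with_card_n)
  have "ksub s m \<subseteq> R"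
  proof
    fix x assume x: "x \<in> ksub s m"
    hence "card x \<le> n" "x \<subseteq> s'" using s mn by (auto simp: ksub_def)
    then obtain y where y: "x \<subseteq> y" "y \<subseteq> s'" "card y = n"
      using exists_subset_between[of x n s'] fs' by auto
    have "y \<in> ksub s' n" using y fs' by (auto simp: ksub_def intro: finite_subset)
    hence "y \<in> lift m n R" using s' by blast
    moreover have "x \<in> ksub y m" using x y by (auto simp: ksub_def)
    ultimately show "x \<in> R" by (auto simp: lift_def)
  qed
  moreover have "s \<in> kset j" using s by (auto simp: kset_def)
  ultimately show "\<exists>s\<in>kset j. ksub s m \<subseteq> R" by blast
qed

lemma proj_eq:
  assumes mn: "m \<le> n" and p: "ultrafilter_on (kset n) p"
    and th: "\<forall>A\<in>thin_ideal n. kset n - A \<in> p"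
  shows "proj n m p = Fp m n p"
  unfolding proj_def
proof (rule the_equality)
  have U: "ultrafilter_on (kset m) (Fp m n p)"
    unfolding ultrafilter_on_def
  proof (intro conjI allI impI ballI)
    show "A \<subseteq> kset m" if "A \<in> Fp m n p" for A using that by (simp add: Fp_def)
    have "lift m n (kset m) = kset n" unfolding lift_def using ksub_in_kset by blast
    thus "kset m \<in> Fp m n p" using uf_X[OF p] by (simp add: Fp_def)
    show "{} \<notin> Fp m n p" using uf_empty[OF p] lift_empty[OF mn] by (simp add: Fp_def)
    show "B \<in> Fp m n p" if "A \<in> Fp m n p \<and> A \<subseteq> B \<and> B \<subseteq> kset m" for A B
    proof -
      from that have A: "lift m n A \<in> p" "A \<subseteq> B" "B \<subseteq> kset m" by (simp_all add: Fp_def)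
      have l: "lift m n B \<subseteq> kset n" unfolding lift_def by blast
      have "lift m n B \<in> p" by (rule uf_up[OF p A(1) lift_mono[OF A(2)] l])
      with A(3) show ?thesis by (simp add: Fp_def)
    qed
    show "A \<inter> B \<in> Fp m n p" if "A \<in> Fp m n p \<and> B \<in> Fp m n p" for A B
    proof -
      from that have A: "lift m n A \<in> p" "lift m n B \<in> p" "A \<subseteq> kset m" by (simp_all add: Fp_def)
      have "lift m n (A \<inter> B) \<in> p" unfolding lift_inter by (rule uf_int[OF p A(1) A(2)])
      moreover have "A \<inter> B \<subseteq> kset m" using A(3) by blast
      ultimately show ?thesis by (simp add: Fp_def)
    qed
    show "A \<in> Fp m n p \<or> kset m - A \<in> Fp m n p" if "A \<subseteq> kset m" for A
      using Fp_ultra[OF mn p th that] .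
  qed
  show "thick_ultrafilter m (Fp m n p) \<and> (\<forall>R\<in>Fp m n p. {a \<in> kset n. ksub a m \<subseteq> R} \<in> p)"
  proof
    show "thick_ultrafilter m (Fp m n p)"
      unfolding thick_ultrafilter_def using U Fp_thick[OF mn p th] by blast
    have "\<forall>R\<in>Fp m n p. lift m n R \<in> p" unfolding Fp_def by blast
    thus "\<forall>R\<in>Fp m n p. {a \<in> kset n. ksub a m \<subseteq> R} \<in> p" unfolding lift_def .
  qed
  fix q' assume q': "thick_ultrafilter m q' \<and> (\<forall>R\<in>q'. {a \<in> kset n. ksub a m \<subseteq> R} \<in> p)"
  hence uq: "ultrafilter_on (kset m) q'" and cq: "\<forall>R\<in>q'. lift m n R \<in> p"
    unfolding thick_ultrafilter_def lift_def by blast+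
  show "q' = Fp m n p"
  proof
    show "q' \<subseteq> Fp m n p" using uq cq uf_sub[OF uq] unfolding Fp_def by blast
    show "Fp m n p \<subseteq> q'"
    proof
      fix R assume R: "R \<in> Fp m n p"
      show "R \<in> q'"
      proof (rule ccontr)
        assume "R \<notin> q'"
        hence "kset m - R \<in> q'" using uf_compl[OF uq] R unfolding Fp_def by blast
        hence "lift m n (kset m - R) \<in> p" using cq by blast
        moreover have "lift m n R \<in> p" using R by (simp add: Fp_def)
        ultimately show False using ultra_inter_empty[OF p] lift_disj[OF mn] by blast
      qed
    qed
  qed
qed

lemma shadow_lift_sub: "m \<le> n \<Longrightarrow> shadow m n (lift m n R) \<subseteq> R"
proof
  fix s assume mn: "m \<le> n" and s: "s \<in> shadow m n (lift m n R)"
  then obtain t where t: "t \<in> kset (n - m)" "s \<union> t \<in> lift m n R" "s \<in> kset m"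
    by (auto simp: shadow_def)
  have "s \<in> ksub (s \<union> t) m" using t by (auto simp: ksub_def kset_def)
  thus "s \<in> R" using t by (auto simp: lift_def)
qed

theorem mainTheorem11:
  fixes m n :: nat and S :: "nat set set" and p q :: "nat set set set"
  assumes "m < n"
    and "S \<subseteq> kset n"
    and "\<not> fin_near_closed m n S"
    and "ultrafilter_on (kset n) p"
    and "ultrafilter_on (kset n) q"
    and "intertwines m n p q S"
  shows "proj n m p = proj n m q"
proof -
  have mn: "m \<le> n" using assms(1) by simp
  note p = assms(4) and q = assms(5)
  have I1: "\<And>T. T \<subseteq> kset n \<Longrightarrow> near_closed m n T \<Longrightarrow> T - S \<in> thin_ideal n \<Longrightarrow> S - T \<in> p"
    and I2: "\<And>T. T \<in> p \<Longrightarrow> T \<subseteq> S \<Longrightarrow> psi m n T - S \<in> q"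
    and thp: "\<forall>A\<in>thin_ideal n. kset n - A \<in> p"
    and thq: "\<forall>A\<in>thin_ideal n. kset n - A \<in> q"
  proof -
    have I: "(\<forall>T. T \<subseteq> kset n \<and> near_closed m n T \<and> T - S \<in> thin_ideal n \<longrightarrow> S - T \<in> p) \<and>
     (\<forall>T\<in>p. T \<subseteq> S \<longrightarrow> psi m n T - S \<in> q) \<and>
     (\<forall>A\<in>thin_ideal n. kset n - A \<in> p \<and> kset n - A \<in> q)"
      using assms(6) unfolding intertwines_def .
    show "\<And>T. T \<subseteq> kset n \<Longrightarrow> near_closed m n T \<Longrightarrow> T - S \<in> thin_ideal n \<Longrightarrow> S - T \<in> p"
      using I by blast
    show "\<And>T. T \<in> p \<Longrightarrow> T \<subseteq> S \<Longrightarrow> psi m n T - S \<in> q" using I by blast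
    show "\<forall>A\<in>thin_ideal n. kset n - A \<in> p" using I by blast
    show "\<forall>A\<in>thin_ideal n. kset n - A \<in> q" using I by blast
  qed
  have "closed_set m n {}"
    using lift_empty[OF mn] by (simp add: closed_set_def psi_def shadow_def)
  hence "near_closed m n {}" using thin_empty by (auto simp: near_closed_def)
  hence Sp: "S \<in> p" using I1[of "{}"] thin_empty by simp
  have sub1: "Fp m n p \<subseteq> Fp m n q"
  proof
    fix R assume R: "R \<in> Fp m n p"
    define T where "T = S \<inter> lift m n R"
    have Tp: "T \<in> p" using R Sp uf_int[OF p] unfolding Fp_def T_def by blast
    have "psi m n T - S \<in> q" using I2[OF Tp] by (simp add: T_def)
    moreover have "psi m n T \<subseteq> lift m n R"
    proof -
      have "shadow m n T \<subseteq> shadow m n (lift m n R)"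
        unfolding T_def shadow_def by blast
      also have "\<dots> \<subseteq> R" by (rule shadow_lift_sub[OF mn])
      finally show ?thesis unfolding psi_def by (rule lift_mono)
    qed
    moreover have "lift m n R \<subseteq> kset n" by (auto simp: lift_def)
    ultimately have "lift m n R \<in> q" using q
      using uf_up[OF q] by (meson Diff_subset subset_trans)
    thus "R \<in> Fp m n q" using R by (simp add: Fp_def)
  qed
  have "Fp m n q \<subseteq> Fp m n p"
  proof
    fix R assume R: "R \<in> Fp m n q"
    show "R \<in> Fp m n p"
    proof (rule ccontr)
      assume "R \<notin> Fp m n p"
      hence "kset m - R \<in> Fp m n p" using Fp_ultra[OF mn p thp] R by (auto simp: Fp_def)
      hence "kset m - R \<in> Fp m n q" using sub1 by blast
      thus False using R ultra_inter_empty[OF q] lift_disj[OF mn] by (auto simp: Fp_def)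
    qed
  qed
  with sub1 have "Fp m n p = Fp m n q" by blast
  thus ?thesis using proj_eq[OF mn p thp] proj_eq[OF mn q thq] by simp
qed

end
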